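(* Let $A$ be an Arens regular Banach algebra and let $(\pi_1,X,\pi_2)$ be a Banach $A$-module. Then $(\pi_2^{**},X^*,\pi_1^{r**r})$ is a Banach $A^{**}$-module (with left action $\pi_2^{**}:A^{**}\times X^*\to X^*$ and right action $\pi_1^{r**r}:X^*\times A^{**}\to X^*$) if and only if, for every $x\in X$, the bilinear map $$\theta_x:A\times A\to X,\qquad \theta_x(a,b)=\pi_1(a,\pi_2(x,b))=\pi_2(\pi_1(a,x),b)$$ is Arens regular.
   Context: Normed spaces are identified with their canonical images in their second duals. For a bounded bilinear map $f:X\times Y\to Z$, the adjoint $f^*:Z^*\times X\to Y^*$ is defined by $\langle f^*(z^*,x),y\rangle=\langle z^*,f(x,y)\rangle$; iterating gives $f^{**}=(f^* )^*:Y^{**}\times Z^*\to X^*$, $f^{***}:X^{**}\times Y^{**}\to Z^{**}$, etc. The flip is $f^r(y,x)=f(x,y)$; superscripts are applied successively left to right (e.g. $\pi_1^{r**r}$: flip $\pi_1$, take two adjoints, flip). $f$ is Arens regular if $f^{***}=f^{r***r}$. A Banach algebra $A$ with multiplication $\pi$ is Arens regular if $\pi$ is, in which case $A^{**}$ carries the single Arens product $\pi^{***}=\pi^{r***r}$. A Banach $A$-module $(\pi_1,X,\pi_2)$ consists of a Banach space $X$ and bounded bilinear maps $\pi_1:A\times X\to X$, $\pi_2:X\times A\to X$ with $\pi_1(ab,x)=\pi_1(a,\pi_1(b,x))$, $\pi_2(x,ab)=\pi_2(\pi_2(x,a),b)$, $\pi_1(a,\pi_2(x,b))=\pi_2(\pi_1(a,x),b)$;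 a Banach $A^{**}$-module is defined analogously with $A^{**}$ in place of $A$. *)

theory Defs
  imports "HOL-Analysis.Analysis"
begin

text \<open>Duals are real dual spaces X* = (X \<Rightarrow>L real). Bilinear maps are curried.\<close>

definition adj ::
  "('x::real_normed_vector \<Rightarrow> 'y::real_normed_vector \<Rightarrow> 'z::real_normed_vector)
     \<Rightarrow> ('z \<Rightarrow>\<^sub>L real) \<Rightarrow> 'x \<Rightarrow> ('y \<Rightarrow>\<^sub>L real)" where
  "adj f = (\<lambda>zs x. Blinfun (\<lambda>y. blinfun_apply zs (f x y)))"

definition bflip :: "('x \<Rightarrow> 'y \<Rightarrow> 'z) \<Rightarrow> 'y \<Rightarrow> 'x \<Rightarrow> 'z" where
  "bflip f = (\<lambda>y x. f x y)"

definition adj3 ::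
  "('x::real_normed_vector \<Rightarrow> 'y::real_normed_vector \<Rightarrow> 'z::real_normed_vector)
     \<Rightarrow> (('x \<Rightarrow>\<^sub>L real) \<Rightarrow>\<^sub>L real) \<Rightarrow> (('y \<Rightarrow>\<^sub>L real) \<Rightarrow>\<^sub>L real)
     \<Rightarrow> (('z \<Rightarrow>\<^sub>L real) \<Rightarrow>\<^sub>L real)" where
  "adj3 f = adj (adj (adj f))"

definition arens_regular ::
  "('x::real_normed_vector \<Rightarrow> 'y::real_normed_vector \<Rightarrow> 'z::real_normed_vector) \<Rightarrow> bool" where
  "arens_regular f \<longleftrightarrow> adj3 f = bflip (adj3 (bflip f))"

definition banach_algebra_mult :: "('a::banach \<Rightarrow> 'a \<Rightarrow> 'a) \<Rightarrow> bool" where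
  "banach_algebra_mult m \<longleftrightarrow> bounded_bilinear m \<and> (\<forall>a b c. m (m a b) c = m a (m b c))"

definition banach_module ::
  "('a::real_normed_vector \<Rightarrow> 'a \<Rightarrow> 'a) \<Rightarrow> ('a \<Rightarrow> 'x::banach \<Rightarrow> 'x) \<Rightarrow> ('x \<Rightarrow> 'a \<Rightarrow> 'x) \<Rightarrow> bool" where
  "banach_module m l r \<longleftrightarrow> bounded_bilinear l \<and> bounded_bilinear r \<and>
     (\<forall>a b x. l (m a b) x = l a (l b x)) \<and>
     (\<forall>a b x. r x (m a b) = r (r x a) b) \<and>
     (\<forall>a b x. l a (r x b) = r (l a x) b)"

end

theory Submission
  imports Defs
begin

lemma adj_apply:
  assumes "bounded_bilinear f"
  shows "blinfun_apply (adj f zs x) y = blinfun_apply zs (f x y)"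
proof -
  have "bounded_linear (\<lambda>y. blinfun_apply zs (f x y))"
    using bounded_linear_compose[OF blinfun.bounded_linear_right bounded_bilinear.bounded_linear_right[OF assms]] .
  then show ?thesis unfolding adj_def by (simp add: bounded_linear_Blinfun_apply)
qed

lemma bb_adj:
  assumes f: "bounded_bilinear f"
  shows "bounded_bilinear (adj f)"
proof
  fix a a' b b' and r :: real
  show "adj f (a + a') b = adj f a b + adj f a' b"
    by (rule blinfun_eqI) (simp add: adj_apply[OF f] blinfun.add_left)
  show "adj f a (b + b') = adj f a b + adj f a b'"
    by (rule blinfun_eqI) (simp add: adj_apply[OF f] bounded_bilinear.add_left[OF f] blinfun.add_right blinfun.add_left)
  show "adj f (r *\<^sub>R a) b = r *\<^sub>R adj f a b"
    by (rule blinfun_eqI) (simp add: adj_apply[OF f] blinfun.scaleR_left)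
  show "adj f a (r *\<^sub>R b) = r *\<^sub>R adj f a b"
    by (rule blinfun_eqI) (simp add: adj_apply[OF f] bounded_bilinear.scaleR_left[OF f] blinfun.scaleR_right blinfun.scaleR_left)
next
  obtain K where K: "K \<ge> 0" "\<And>a b. norm (f a b) \<le> norm a * norm b * K"
    using bounded_bilinear.nonneg_bounded[OF f] by blast
  show "\<exists>K. \<forall>a b. norm (adj f a b) \<le> norm a * norm b * K"
  proof (intro exI allI)
    fix zs x
    show "norm (adj f zs x) \<le> norm zs * norm x * K"
    proof (rule norm_blinfun_bound)
      show "0 \<le> norm zs * norm x * K" using K by simp
      fix y
      have "norm (blinfun_apply zs (f x y)) \<le> norm zs * norm (f x y)"
        by (rule norm_blinfun)
      also have "\<dots> \<le> norm zs * (norm x * norm y * K)"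
        by (rule mult_left_mono[OF K(2)]) simp
      finally show "norm (blinfun_apply (adj f zs x) y) \<le> norm zs * norm x * K * norm y"
        by (simp add: adj_apply[OF f] mult_ac)
    qed
  qed
qed

lemma bb_flip: "bounded_bilinear f \<Longrightarrow> bounded_bilinear (bflip f)"
  unfolding bflip_def by (rule bounded_bilinear.flip)

lemma cong_ap: "(\<And>y. blinfun_apply P y = blinfun_apply Q y) \<Longrightarrow> blinfun_apply m P = blinfun_apply m Q"
  by (metis blinfun_eqI)

lemma bflip_apply[simp]: "bflip f y x = f x y"
  by (simp add: bflip_def)

lemmas adj_simps = adj_apply bb_adj bb_flip

theorem proposition3p3:
  fixes \<pi> :: "'a::banach \<Rightarrow> 'a \<Rightarrow> 'a"
    and \<pi>1 :: "'a \<Rightarrow> 'x::banach \<Rightarrow> 'x"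
    and \<pi>2 :: "'x \<Rightarrow> 'a \<Rightarrow> 'x"
  assumes "banach_algebra_mult \<pi>"
    and "arens_regular \<pi>"
    and "banach_module \<pi> \<pi>1 \<pi>2"
  shows "banach_module (adj3 \<pi>) (adj (adj \<pi>2)) (bflip (adj (adj (bflip \<pi>1))))
     \<longleftrightarrow> (\<forall>x. arens_regular (\<lambda>a b. \<pi>1 a (\<pi>2 x b)))"
proof -
  have bb: "bounded_bilinear \<pi>" and assoc: "\<And>a b c. \<pi> (\<pi> a b) c = \<pi> a (\<pi> b c)"
    using assms(1) unfolding banach_algebra_mult_def by auto
  have bb1: "bounded_bilinear \<pi>1" and bb2: "bounded_bilinear \<pi>2"
    and m1: "\<And>a b x. \<pi>1 (\<pi> a b) x = \<pi>1 a (\<pi>1 b x)"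
    and m2: "\<And>a b x. \<pi>2 x (\<pi> a b) = \<pi>2 (\<pi>2 x a) b"
    and m3: "\<And>a b x. \<pi>1 a (\<pi>2 x b) = \<pi>2 (\<pi>1 a x) b"
    using assms(3) unfolding banach_module_def by auto
  have bbt: "bounded_bilinear (\<lambda>a b. \<pi>1 a (\<pi>2 x b))" for x
    using bounded_bilinear.comp[OF bb1 bounded_linear_ident bounded_bilinear.bounded_linear_right[OF bb2]] by simp
  have ar: "adj3 \<pi> p q = adj3 (bflip \<pi>) q p" for p q
    using assms(2) unfolding arens_regular_def bflip_def by metis
  note S = adj_simps bb bb1 bb2 bbt
  have E1: "adj (adj \<pi>2) (adj3 \<pi> m n) f = adj (adj \<pi>2) m (adj (adj \<pi>2) n f)" for m n f
    apply (rule blinfun_eqI)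
    apply (simp add: S adj3_def)
    apply (rule cong_ap, simp add: S)
    apply (rule cong_ap, simp add: S m2)
    done
  have E2: "bflip (adj (adj (bflip \<pi>1))) f (adj3 \<pi> m n) =
      bflip (adj (adj (bflip \<pi>1))) (bflip (adj (adj (bflip \<pi>1))) f m) n" for m n f
    apply (rule blinfun_eqI)
    apply (simp add: S ar)
    apply (simp add: S adj3_def)
    apply (rule cong_ap, simp add: S)
    apply (rule cong_ap, simp add: S m1)
    done
  define th where "th = (\<lambda>x a b. \<pi>1 a (\<pi>2 x b))"
  have bbth: "bounded_bilinear (th x)" for x using bbt unfolding th_def .
  have th_apply: "th x a b = \<pi>1 a (\<pi>2 x b)" for x a b unfolding th_def by simp
  note S = S bbth th_apply
  let ?L = "adj (adj \<pi>2)" and ?R = "bflip (adj (adj (bflip \<pi>1)))"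
  have K1: "blinfun_apply (?L m (?R f n)) x = blinfun_apply (adj3 (bflip (th x)) m n) f" for m n f x
    apply (simp add: S adj3_def)
    apply (rule cong_ap, simp add: S)
    apply (rule cong_ap, simp add: S m3)
    done
  have K2: "blinfun_apply (?R (?L m f) n) x = blinfun_apply (adj3 (th x) n m) f" for m n f x
    apply (simp add: S adj3_def)
    apply (rule cong_ap, simp add: S)
    apply (rule cong_ap, simp add: S m3)
    done
  have E3: "(\<forall>m f n. ?L m (?R f n) = ?R (?L m f) n) \<longleftrightarrow> (\<forall>x. arens_regular (th x))"
  proof
    assume H: "\<forall>m f n. ?L m (?R f n) = ?R (?L m f) n"
    show "\<forall>x. arens_regular (th x)"
      unfolding arens_regular_def
    proof (intro allI ext blinfun_eqI)
      fix x p q f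
      have "blinfun_apply (adj3 (th x) p q) f = blinfun_apply (?R (?L q f) p) x" by (simp only: K2)
      also have "\<dots> = blinfun_apply (?L q (?R f p)) x" using H by simp
      also have "\<dots> = blinfun_apply (adj3 (bflip (th x)) q p) f" by (simp only: K1)
      finally show "blinfun_apply (adj3 (th x) p q) f = blinfun_apply (bflip (adj3 (bflip (th x))) p q) f"
        by simp
    qed
  next
    assume H: "\<forall>x. arens_regular (th x)"
    show "\<forall>m f n. ?L m (?R f n) = ?R (?L m f) n"
    proof (intro allI blinfun_eqI)
      fix m f n x
      have A: "adj3 (th x) n m = adj3 (bflip (th x)) m n"
        using H unfolding arens_regular_def by (metis bflip_apply)
      show "blinfun_apply (?L m (?R f n)) x = blinfun_apply (?R (?L m f) n) x"
        by (simp only: K1 K2 A)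
    qed
  qed
  have bbL: "bounded_bilinear ?L" and bbR: "bounded_bilinear ?R" by (simp_all add: S)
  show ?thesis
    unfolding banach_module_def
    using E1 E2 E3 bbL bbR unfolding th_def by blast
qed

end
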